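(* Every vertex cover TAR graph is unique: for all graphs $G$ and $G'$, if $\mathfrak{C}(G)\cong\mathfrak{C}(G')$ then $G\cong G'$.
   Context: All graphs are finite, simple, undirected, with nonempty vertex set (isolated vertices allowed). A vertex cover of $G$ is a set $S\subseteq V(G)$ containing at least one endpoint of every edge. The vertex cover TAR graph $\mathfrak{C}(G)$ has as vertices the vertex covers of $G$, with $S_1S_2$ an edge iff $|S_1\ominus S_2|=1$ (symmetric difference). *)

theory Defs
  imports Main
begin

definition simple_graph :: "'a set \<Rightarrow> 'a set set \<Rightarrow> bool" where
  "simple_graph V E \<longleftrightarrow> finite V \<and> V \<noteq> {} \<and> (\<forall>e\<in>E. e \<subseteq> V \<and> card e = 2)"

definition graph_iso :: "'a set \<Rightarrow> 'a set set \<Rightarrow> 'b set \<Rightarrow> 'b set set \<Rightarrow> bool" where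
  "graph_iso V E V' E' \<longleftrightarrow>
     (\<exists>f. bij_betw f V V' \<and> (\<forall>u\<in>V. \<forall>v\<in>V. {u, v} \<in> E \<longleftrightarrow> {f u, f v} \<in> E'))"

definition vertex_covers :: "'a set \<Rightarrow> 'a set set \<Rightarrow> 'a set set" where
  "vertex_covers V E = {S. S \<subseteq> V \<and> (\<forall>e\<in>E. S \<inter> e \<noteq> {})}"

definition vc_tar_edges :: "'a set \<Rightarrow> 'a set set \<Rightarrow> 'a set set set" where
  "vc_tar_edges V E = {{S1, S2} | S1 S2. S1 \<in> vertex_covers V E \<and> S2 \<in> vertex_covers V E
        \<and> card ((S1 - S2) \<union> (S2 - S1)) = 1}"

end

theory Submission
  imports Defs
begin

definition adj :: "'a set \<Rightarrow> 'a set set \<Rightarrow> 'a set \<Rightarrow> 'a set \<Rightarrow> bool" where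
  "adj V E S T \<longleftrightarrow> S \<in> vertex_covers V E \<and> T \<in> vertex_covers V E \<and> card (S - T \<union> (T - S)) = 1"

definition lab :: "'a set \<Rightarrow> 'a set \<Rightarrow> 'a" where
  "lab S T = the_elem (S - T \<union> (T - S))"

definition oppR :: "'a set \<Rightarrow> 'a set set \<Rightarrow> (('a set \<times> 'a set) \<times> ('a set \<times> 'a set)) set" where
  "oppR V E = {((a,b),(c,d)). adj V E a b \<and> adj V E b d \<and> adj V E d c \<and> adj V E c a \<and> a \<noteq> d \<and> b \<noteq> c}"

lemma adj_iff: "{S,T} \<in> vc_tar_edges V E \<longleftrightarrow> adj V E S T"
proof
  assume "{S,T} \<in> vc_tar_edges V E"
  then obtain S1 S2 where eq: "{S,T} = {S1,S2}" and h: "S1 \<in> vertex_covers V E" "S2 \<in> vertex_covers V E"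
      "card ((S1 - S2) \<union> (S2 - S1)) = 1" unfolding vc_tar_edges_def mem_Collect_eq by metis
  from eq have "(S = S1 \<and> T = S2) \<or> (S = S2 \<and> T = S1)" by (simp add: doubleton_eq_iff)
  then show "adj V E S T"
  proof
    assume "S = S1 \<and> T = S2" then show ?thesis using h unfolding adj_def by simp
  next
    assume "S = S2 \<and> T = S1" then show ?thesis using h unfolding adj_def by (simp add: Un_commute)
  qed
next
  assume "adj V E S T"
  then have "S \<in> vertex_covers V E \<and> T \<in> vertex_covers V E \<and> card ((S - T) \<union> (T - S)) = 1"
    unfolding adj_def by simp
  then show "{S,T} \<in> vc_tar_edges V E" unfolding vc_tar_edges_def mem_Collect_eq by metis
qed

lemma adj_lab: "adj V E S T \<Longrightarrow> S - T \<union> (T - S) = {lab S T}"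
proof -
  assume "adj V E S T"
  then have "card (S - T \<union> (T - S)) = 1" unfolding adj_def by simp
  then obtain z where "S - T \<union> (T - S) = {z}" using card_1_singleton_iff[of "S - T \<union> (T - S)"] by auto
  then show ?thesis unfolding lab_def by simp
qed

lemma adj_sym: "adj V E S T \<Longrightarrow> adj V E T S"
  unfolding adj_def by (simp add: Un_commute)

lemma lab_sym: "lab S T = lab T S"
  unfolding lab_def by (simp add: Un_commute)

lemma opp_lab:
  assumes "((a,b),(c,d)) \<in> oppR V E"
  shows "lab a b = lab c d"
proof -
  have h: "adj V E a b" "adj V E b d" "adj V E d c" "adj V E c a" "a \<noteq> d" "b \<noteq> c"
    using assms unfolding oppR_def by auto
  define x where "x = lab a b"
  define y where "y = lab b d"
  define z where "z = lab d c"
  define w where "w = lab c a"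
  have 1: "\<And>t. (t \<in> a \<longleftrightarrow> t \<in> b) \<longleftrightarrow> t \<noteq> x"
  proof -
    fix t
    have "t \<in> a - b \<union> (b - a) \<longleftrightarrow> t = x" using adj_lab[OF h(1)] unfolding x_def by simp
    then show "(t \<in> a \<longleftrightarrow> t \<in> b) \<longleftrightarrow> t \<noteq> x" by blast
  qed
  have 2: "\<And>t. (t \<in> b \<longleftrightarrow> t \<in> d) \<longleftrightarrow> t \<noteq> y"
  proof -
    fix t
    have "t \<in> b - d \<union> (d - b) \<longleftrightarrow> t = y" using adj_lab[OF h(2)] unfolding y_def by simp
    then show "(t \<in> b \<longleftrightarrow> t \<in> d) \<longleftrightarrow> t \<noteq> y" by blast
  qed
  have 3: "\<And>t. (t \<in> d \<longleftrightarrow> t \<in> c) \<longleftrightarrow> t \<noteq> z"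
  proof -
    fix t
    have "t \<in> d - c \<union> (c - d) \<longleftrightarrow> t = z" using adj_lab[OF h(3)] unfolding z_def by simp
    then show "(t \<in> d \<longleftrightarrow> t \<in> c) \<longleftrightarrow> t \<noteq> z" by blast
  qed
  have 4: "\<And>t. (t \<in> c \<longleftrightarrow> t \<in> a) \<longleftrightarrow> t \<noteq> w"
  proof -
    fix t
    have "t \<in> c - a \<union> (a - c) \<longleftrightarrow> t = w" using adj_lab[OF h(4)] unfolding w_def by simp
    then show "(t \<in> c \<longleftrightarrow> t \<in> a) \<longleftrightarrow> t \<noteq> w" by blast
  qed
  have xy: "x \<noteq> y"
  proof
    assume "x = y"
    then have "a = d" using 1 2 by blast
    then show False using h(5) by simp
  qed
  have yz: "y \<noteq> z"
  proof
    assume "y = z"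
    then have "b = c" using 3 2 by blast
    then show False using h(6) by simp
  qed
  have "z = x"
  proof (rule ccontr)
    assume zx: "z \<noteq> x"
    have "w = x" using 1[of x] 2[of x] 3[of x] 4[of x] xy zx by blast
    then show False using 1[of y] 2[of y] 3[of y] 4[of y] xy yz by blast
  qed
  then show ?thesis unfolding x_def z_def using lab_sym by metis
qed

lemma opp_lab_rt:
  assumes "(p,q) \<in> (oppR V E)^*"
  shows "lab (fst p) (snd p) = lab (fst q) (snd q)"
  using assms
proof (induction rule: rtrancl_induct)
  case base then show ?case by simp
next
  case (step y z)
  then show ?case using opp_lab[of "fst y" "snd y" "fst z" "snd z"] by simp
qed

lemma opp_swap: "((a,b),(c,d)) \<in> oppR V E \<Longrightarrow> ((b,a),(d,c)) \<in> oppR V E"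
  unfolding oppR_def by (auto intro: adj_sym)

lemma opp_swap_rt:
  assumes "(p,q) \<in> (oppR V E)^*"
  shows "((snd p, fst p),(snd q, fst q)) \<in> (oppR V E)^*"
  using assms
proof (induction rule: rtrancl_induct)
  case base then show ?case by simp
next
  case (step y z)
  then have "((snd y, fst y),(snd z, fst z)) \<in> oppR V E"
    using opp_swap[of "fst y" "snd y" "fst z" "snd z"] by simp
  then show ?case using step.IH by (rule rtrancl_into_rtrancl[rotated])
qed

lemma cov_sub: "S \<in> vertex_covers V E \<Longrightarrow> S \<subseteq> V"
  unfolding vertex_covers_def by auto

lemma cov_mono: "S \<in> vertex_covers V E \<Longrightarrow> S \<subseteq> T \<Longrightarrow> T \<subseteq> V \<Longrightarrow> T \<in> vertex_covers V E"
  unfolding vertex_covers_def by blast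

lemma cov_minus2:
  assumes sg: "simple_graph V E" and "{u,v} \<notin> E"
  shows "V - {u,v} \<in> vertex_covers V E"
  unfolding vertex_covers_def
proof (intro CollectI conjI ballI)
  show "V - {u,v} \<subseteq> V" by auto
  fix e assume e: "e \<in> E"
  have eV: "e \<subseteq> V" and c2: "card e = 2" using sg e unfolding simple_graph_def by auto
  show "(V - {u,v}) \<inter> e \<noteq> {}"
  proof
    assume "(V - {u,v}) \<inter> e = {}"
    then have sub: "e \<subseteq> {u,v}" using eV by blast
    have "card {u,v} \<le> 2" by (simp add: card_insert_le_m1)
    moreover have "card e \<le> card {u,v}" using sub by (simp add: card_mono)
    ultimately have "card {u,v} = 2" using c2 by linarith
    then have "e = {u,v}" using sub c2 by (metis card_subset_eq finite.emptyI finite.insertI)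
    then show False using e assms(2) by simp
  qed
qed

lemma cov_V: assumes sg: "simple_graph V E" shows "V \<in> vertex_covers V E"
  unfolding vertex_covers_def
proof (intro CollectI conjI ballI)
  show "V \<subseteq> V" by simp
  fix e assume e: "e \<in> E"
  have eV: "e \<subseteq> V" and c2: "card e = 2" using sg e unfolding simple_graph_def by auto
  have "e \<noteq> {}" using c2 by auto
  then show "V \<inter> e \<noteq> {}" using eV by blast
qed

lemma cov_minus1:
  assumes sg: "simple_graph V E"
  shows "V - {x} \<in> vertex_covers V E"
proof -
  have "{x,x} \<notin> E" using sg unfolding simple_graph_def by auto
  then show ?thesis using cov_minus2[OF sg, of x x] by simp
qed

lemma cov_noedge:
  assumes "T \<in> vertex_covers V E" "x \<notin> T" "y \<notin> T" shows "{x,y} \<notin> E"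
proof
  assume "{x,y} \<in> E"
  have all: "\<forall>e\<in>E. T \<inter> e \<noteq> {}" using assms(1) unfolding vertex_covers_def by simp
  have "T \<inter> {x,y} \<noteq> {}" using all \<open>{x,y} \<in> E\<close> by (rule bspec)
  then show False using assms(2,3) by simp
qed

lemma chain:
  assumes sg: "simple_graph V E"
  shows "S \<in> vertex_covers V E \<Longrightarrow> x \<in> V \<Longrightarrow> x \<notin> S \<Longrightarrow>
     ((S, insert x S), (V - {x}, V)) \<in> (oppR V E)^*"
proof (induction "card (V - insert x S)" arbitrary: S rule: less_induct)
  case less
  have SV: "S \<subseteq> V" using less.prems cov_sub by blast
  have fin: "finite V" using sg unfolding simple_graph_def by auto
  show ?case
  proof (cases "V - insert x S = {}")
    case True
    then have "S = V - {x}" "insert x S = V" using SV less.prems by auto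
    then show ?thesis by simp
  next
    case False
    then obtain y where y: "y \<in> V" "y \<noteq> x" "y \<notin> S" by auto
    have c1: "insert x S \<in> vertex_covers V E" using less.prems SV by (intro cov_mono[OF less.prems(1)]) auto
    have c2: "insert y S \<in> vertex_covers V E" using less.prems SV y by (intro cov_mono[OF less.prems(1)]) auto
    have c3: "insert x (insert y S) \<in> vertex_covers V E" using less.prems SV y by (intro cov_mono[OF less.prems(1)]) auto
    have "((S, insert x S), (insert y S, insert x (insert y S))) \<in> oppR V E"
    proof -
      have e1: "S - insert x S \<union> (insert x S - S) = {x}" using less.prems by auto
      have e2: "insert x S - insert x (insert y S) \<union> (insert x (insert y S) - insert x S) = {y}" using less.prems y by auto
      have e3: "insert x (insert y S) - insert y S \<union> (insert y S - insert x (insert y S)) = {x}" using less.prems y by auto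
      have e4: "insert y S - S \<union> (S - insert y S) = {y}" using less.prems y by auto
      have n1: "S \<noteq> insert x (insert y S)" "insert x S \<noteq> insert y S" using less.prems y by auto
      show ?thesis unfolding oppR_def adj_def using less.prems c1 c2 c3 e1 e2 e3 e4 n1 by simp
    qed
    moreover have "((insert y S, insert x (insert y S)), (V - {x}, V)) \<in> (oppR V E)^*"
    proof (rule less.hyps)
      show "card (V - insert x (insert y S)) < card (V - insert x S)"
        using y fin by (intro psubset_card_mono) auto
    qed (use c2 less.prems y in auto)
    ultimately show ?thesis by (rule converse_rtrancl_into_rtrancl)
  qed
qed


lemma singleton_not_edge: "simple_graph V E \<Longrightarrow> {x} \<notin> E"
  unfolding simple_graph_def by auto

lemma opp_map:
  assumes bij: "bij_betw \<phi> (vertex_covers V E) (vertex_covers V' E')"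
    and pres: "\<forall>S\<in>vertex_covers V E. \<forall>T\<in>vertex_covers V E. adj V E S T \<longleftrightarrow> adj V' E' (\<phi> S) (\<phi> T)"
    and o: "((a,b),(c,d)) \<in> oppR V E"
  shows "((\<phi> a,\<phi> b),(\<phi> c,\<phi> d)) \<in> oppR V' E'"
proof -
  have h: "adj V E a b" "adj V E b d" "adj V E d c" "adj V E c a" "a \<noteq> d" "b \<noteq> c"
    using o unfolding oppR_def by auto
  have cv: "a \<in> vertex_covers V E" "b \<in> vertex_covers V E" "c \<in> vertex_covers V E" "d \<in> vertex_covers V E"
    using h unfolding adj_def by auto
  have inj: "inj_on \<phi> (vertex_covers V E)" using bij bij_betw_def by blast
  have "adj V' E' (\<phi> a) (\<phi> b)" "adj V' E' (\<phi> b) (\<phi> d)" "adj V' E' (\<phi> d) (\<phi> c)" "adj V' E' (\<phi> c) (\<phi> a)"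
    using pres cv h by auto
  moreover have "\<phi> a \<noteq> \<phi> d" "\<phi> b \<noteq> \<phi> c" using inj cv h(5,6) by (auto dest: inj_onD)
  ultimately show ?thesis unfolding oppR_def by simp
qed

lemma opp_map_rt:
  assumes bij: "bij_betw \<phi> (vertex_covers V E) (vertex_covers V' E')"
    and pres: "\<forall>S\<in>vertex_covers V E. \<forall>T\<in>vertex_covers V E. adj V E S T \<longleftrightarrow> adj V' E' (\<phi> S) (\<phi> T)"
    and o: "(p,q) \<in> (oppR V E)^*"
  shows "(map_prod \<phi> \<phi> p, map_prod \<phi> \<phi> q) \<in> (oppR V' E')^*"
  using o
proof (induction rule: rtrancl_induct)
  case base then show ?case by simp
next
  case (step y z)
  have "(map_prod \<phi> \<phi> y, map_prod \<phi> \<phi> z) \<in> oppR V' E'"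
    using opp_map[OF bij pres, of "fst y" "snd y" "fst z" "snd z"] step.hyps(2)
    by (cases y, cases z) simp
  then show ?case using step.IH by (rule rtrancl_into_rtrancl[rotated])
qed

lemma key:
  assumes sg: "simple_graph V E"
    and bij: "bij_betw \<phi> (vertex_covers V E) (vertex_covers V' E')"
    and pres: "\<forall>S\<in>vertex_covers V E. \<forall>T\<in>vertex_covers V E. adj V E S T \<longleftrightarrow> adj V' E' (\<phi> S) (\<phi> T)"
    and ab: "adj V E a b"
  shows "lab (\<phi> a) (\<phi> b) = lab (\<phi> (V - {lab a b})) (\<phi> V)"
proof -
  define x where "x = lab a b"
  have sd: "a - b \<union> (b - a) = {x}" using adj_lab[OF ab] unfolding x_def .
  have mem: "\<And>t. (t \<in> a \<longleftrightarrow> t \<in> b) \<longleftrightarrow> t \<noteq> x"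
  proof -
    fix t
    have "t \<in> a - b \<union> (b - a) \<longleftrightarrow> t = x" using sd by simp
    then show "(t \<in> a \<longleftrightarrow> t \<in> b) \<longleftrightarrow> t \<noteq> x" by auto
  qed
  have ca: "a \<in> vertex_covers V E" and cb: "b \<in> vertex_covers V E" using ab unfolding adj_def by auto
  have "x \<in> a \<or> x \<in> b" using mem[of x] by auto
  then have xV: "x \<in> V" using cov_sub[OF ca] cov_sub[OF cb] by auto
  show ?thesis
  proof (cases "x \<in> b")
    case True
    then have xa: "x \<notin> a" using mem[of x] by auto
    have beq: "b = insert x a"
    proof (rule set_eqI)
      fix t show "t \<in> b \<longleftrightarrow> t \<in> insert x a" using mem[of t] True by auto
    qed
    have "((a, b), (V - {x}, V)) \<in> (oppR V E)^*" using chain[OF sg ca xV xa] beq by simp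
    from opp_map_rt[OF bij pres this]
    have "((\<phi> a, \<phi> b), (\<phi> (V - {x}), \<phi> V)) \<in> (oppR V' E')^*" by simp
    from opp_lab_rt[OF this] show ?thesis unfolding x_def by simp
  next
    case False
    then have xa: "x \<notin> b" and xa2: "x \<in> a" using mem[of x] by auto
    have beq: "a = insert x b"
    proof (rule set_eqI)
      fix t show "t \<in> a \<longleftrightarrow> t \<in> insert x b" using mem[of t] xa2 by auto
    qed
    have "((b, a), (V - {x}, V)) \<in> (oppR V E)^*" using chain[OF sg cb xV xa] beq by simp
    from opp_swap_rt[OF this] have "((a, b), (V, V - {x})) \<in> (oppR V E)^*" by simp
    from opp_map_rt[OF bij pres this]
    have "((\<phi> a, \<phi> b), (\<phi> V, \<phi> (V - {x}))) \<in> (oppR V' E')^*" by simp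
    from opp_lab_rt[OF this] show ?thesis unfolding x_def by (simp add: lab_sym)
  qed
qed

lemma adj_top:
  assumes sg: "simple_graph V E" and xV: "x \<in> V"
  shows "adj V E (V - {x}) V" "lab (V - {x}) V = x"
proof -
  have e: "(V - {x}) - V \<union> (V - (V - {x})) = {x}" using xV by auto
  show "adj V E (V - {x}) V" unfolding adj_def using cov_minus1[OF sg] cov_V[OF sg] e by simp
  show "lab (V - {x}) V = x" unfolding lab_def e by simp
qed


lemma half:
  assumes sg: "simple_graph V E" and sg': "simple_graph V' E'"
    and bij: "bij_betw \<phi> (vertex_covers V E) (vertex_covers V' E')"
    and pres: "\<forall>S\<in>vertex_covers V E. \<forall>T\<in>vertex_covers V E. adj V E S T \<longleftrightarrow> adj V' E' (\<phi> S) (\<phi> T)"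
    and bij2: "bij_betw \<psi> (vertex_covers V' E') (vertex_covers V E)"
    and pres2: "\<forall>S\<in>vertex_covers V' E'. \<forall>T\<in>vertex_covers V' E'. adj V' E' S T \<longleftrightarrow> adj V E (\<psi> S) (\<psi> T)"
    and inv: "\<forall>S\<in>vertex_covers V E. \<psi> (\<phi> S) = S"
    and xV: "x \<in> V"
  shows "lab (\<phi> (V - {x})) (\<phi> V) \<in> V'"
    and "lab (\<psi> (V' - {lab (\<phi> (V - {x})) (\<phi> V)})) (\<psi> V') = x"
proof -
  have a1: "adj V E (V - {x}) V" and l1: "lab (V - {x}) V = x" using adj_top[OF sg xV] by auto
  have c1: "V - {x} \<in> vertex_covers V E" "V \<in> vertex_covers V E" using a1 unfolding adj_def by auto
  have a2: "adj V' E' (\<phi> (V - {x})) (\<phi> V)" using pres c1 a1 by blast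
  have sd: "\<phi> (V - {x}) - \<phi> V \<union> (\<phi> V - \<phi> (V - {x})) = {lab (\<phi> (V - {x})) (\<phi> V)}"
    by (rule adj_lab[OF a2])
  have c2: "\<phi> (V - {x}) \<in> vertex_covers V' E'" "\<phi> V \<in> vertex_covers V' E'" using a2 unfolding adj_def by auto
  have "lab (\<phi> (V - {x})) (\<phi> V) \<in> \<phi> (V - {x}) \<union> \<phi> V" using sd by auto
  then show "lab (\<phi> (V - {x})) (\<phi> V) \<in> V'" using cov_sub[OF c2(1)] cov_sub[OF c2(2)] by auto
  have "lab (\<psi> (\<phi> (V - {x}))) (\<psi> (\<phi> V)) = lab (\<psi> (V' - {lab (\<phi> (V - {x})) (\<phi> V)})) (\<psi> V')"
    by (rule key[OF sg' bij2 pres2 a2])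
  then show "lab (\<psi> (V' - {lab (\<phi> (V - {x})) (\<phi> V)})) (\<psi> V') = x"
    using inv c1 l1 by simp
qed

lemma edge_half:
  assumes sg: "simple_graph V E" and sg': "simple_graph V' E'"
    and bij: "bij_betw \<phi> (vertex_covers V E) (vertex_covers V' E')"
    and pres: "\<forall>S\<in>vertex_covers V E. \<forall>T\<in>vertex_covers V E. adj V E S T \<longleftrightarrow> adj V' E' (\<phi> S) (\<phi> T)"
    and uV: "u \<in> V" and vV: "v \<in> V" and ne: "{u,v} \<notin> E"
    and fne: "lab (\<phi> (V - {u})) (\<phi> V) \<noteq> lab (\<phi> (V - {v})) (\<phi> V)"
  shows "{lab (\<phi> (V - {u})) (\<phi> V), lab (\<phi> (V - {v})) (\<phi> V)} \<notin> E'"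
proof -
  define fu where "fu = lab (\<phi> (V - {u})) (\<phi> V)"
  define fv where "fv = lab (\<phi> (V - {v})) (\<phi> V)"
  have uv: "u \<noteq> v" using fne by auto
  define S where "S = V - {u,v}"
  have cS: "S \<in> vertex_covers V E" unfolding S_def by (rule cov_minus2[OF sg ne])
  have cu: "V - {u} \<in> vertex_covers V E" and cv: "V - {v} \<in> vertex_covers V E"
    and cV: "V \<in> vertex_covers V E"
    using cov_minus1[OF sg] cov_V[OF sg] by auto
  have e1: "S - (V - {v}) \<union> ((V - {v}) - S) = {u}" unfolding S_def using uV vV uv by auto
  have e2: "S - (V - {u}) \<union> ((V - {u}) - S) = {v}" unfolding S_def using uV vV uv by auto
  have a1: "adj V E S (V - {v})" unfolding adj_def using cS cv e1 by simp
  have l1: "lab S (V - {v}) = u" unfolding lab_def e1 by simp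
  have a2: "adj V E S (V - {u})" unfolding adj_def using cS cu e2 by simp
  have l2: "lab S (V - {u}) = v" unfolding lab_def e2 by simp
  have a3: "adj V E (V - {v}) V" and l3: "lab (V - {v}) V = v" using adj_top[OF sg vV] by auto
  have k1: "lab (\<phi> S) (\<phi> (V - {v})) = fu" using key[OF sg bij pres a1] l1 unfolding fu_def by simp
  have k2: "lab (\<phi> S) (\<phi> (V - {u})) = fv" using key[OF sg bij pres a2] l2 unfolding fv_def by simp
  have k3: "lab (\<phi> (V - {v})) (\<phi> V) = fv" unfolding fv_def by simp
  have b1: "adj V' E' (\<phi> S) (\<phi> (V - {v}))" using pres cS cv a1 by blast
  have b2: "adj V' E' (\<phi> S) (\<phi> (V - {u}))" using pres cS cu a2 by blast
  have b3: "adj V' E' (\<phi> (V - {v})) (\<phi> V)" using pres cv cV a3 by blast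
  define A where "A = \<phi> S"
  define B where "B = \<phi> (V - {v})"
  define C where "C = \<phi> (V - {u})"
  define D where "D = \<phi> V"
  have sd1: "A - B \<union> (B - A) = {fu}" using adj_lab[OF b1] k1 unfolding A_def B_def by simp
  have sd2: "A - C \<union> (C - A) = {fv}" using adj_lab[OF b2] k2 unfolding A_def C_def by simp
  have sd3: "B - D \<union> (D - B) = {fv}" using adj_lab[OF b3] k3 unfolding B_def D_def by simp
  have m1: "fu \<in> B \<longleftrightarrow> fu \<notin> A" "fv \<in> B \<longleftrightarrow> fv \<in> A"
  proof -
    have "fu \<in> A - B \<union> (B - A)" "fv \<notin> A - B \<union> (B - A)" using sd1 fne unfolding fu_def fv_def by auto
    then show "fu \<in> B \<longleftrightarrow> fu \<notin> A" "fv \<in> B \<longleftrightarrow> fv \<in> A" by auto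
  qed
  have m2: "fv \<in> C \<longleftrightarrow> fv \<notin> A" "fu \<in> C \<longleftrightarrow> fu \<in> A"
  proof -
    have "fv \<in> A - C \<union> (C - A)" "fu \<notin> A - C \<union> (C - A)" using sd2 fne unfolding fu_def fv_def by auto
    then show "fv \<in> C \<longleftrightarrow> fv \<notin> A" "fu \<in> C \<longleftrightarrow> fu \<in> A" by auto
  qed
  have m3: "fv \<in> D \<longleftrightarrow> fv \<notin> B" "fu \<in> D \<longleftrightarrow> fu \<in> B"
  proof -
    have "fv \<in> B - D \<union> (D - B)" "fu \<notin> B - D \<union> (D - B)" using sd3 fne unfolding fu_def fv_def by auto
    then show "fv \<in> D \<longleftrightarrow> fv \<notin> B" "fu \<in> D \<longleftrightarrow> fu \<in> B" by auto
  qed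
  have cA: "A \<in> vertex_covers V' E'" and cB: "B \<in> vertex_covers V' E'"
    and cC: "C \<in> vertex_covers V' E'" and cD: "D \<in> vertex_covers V' E'"
    using b1 b2 b3 unfolding adj_def A_def B_def C_def D_def by auto
  have "\<exists>T\<in>vertex_covers V' E'. fu \<notin> T \<and> fv \<notin> T"
  proof (cases "fu \<in> A")
    case True
    show ?thesis
    proof (cases "fv \<in> A")
      case True
      then show ?thesis using cD m1 m3 \<open>fu \<in> A\<close> by auto
    next
      case False
      then show ?thesis using cB m1 \<open>fu \<in> A\<close> by auto
    qed
  next
    case False
    show ?thesis
    proof (cases "fv \<in> A")
      case True
      then show ?thesis using cC m2 \<open>fu \<notin> A\<close> by auto
    next
      case False
      then show ?thesis using cA \<open>fu \<notin> A\<close> by auto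
    qed
  qed
  then obtain T where "T \<in> vertex_covers V' E'" "fu \<notin> T" "fv \<notin> T" by blast
  from cov_noedge[OF this] show ?thesis unfolding fu_def fv_def .
qed


theorem proposition6p6:
  fixes V :: "'a set" and E :: "'a set set" and V' :: "'b set" and E' :: "'b set set"
  assumes "simple_graph V E" and "simple_graph V' E'"
    and "graph_iso (vertex_covers V E) (vc_tar_edges V E) (vertex_covers V' E') (vc_tar_edges V' E')"
  shows "graph_iso V E V' E'"
proof -
  note sg = assms(1) and sg' = assms(2)
  obtain \<phi> where bij: "bij_betw \<phi> (vertex_covers V E) (vertex_covers V' E')"
    and iso: "\<forall>S\<in>vertex_covers V E. \<forall>T\<in>vertex_covers V E.
        {S,T} \<in> vc_tar_edges V E \<longleftrightarrow> {\<phi> S, \<phi> T} \<in> vc_tar_edges V' E'"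
    using assms(3) unfolding graph_iso_def by blast
  have pres: "\<forall>S\<in>vertex_covers V E. \<forall>T\<in>vertex_covers V E. adj V E S T \<longleftrightarrow> adj V' E' (\<phi> S) (\<phi> T)"
    using iso by (simp add: adj_iff)
  define \<psi> where "\<psi> = inv_into (vertex_covers V E) \<phi>"
  have bij2: "bij_betw \<psi> (vertex_covers V' E') (vertex_covers V E)"
    unfolding \<psi>_def by (rule bij_betw_inv_into[OF bij])
  have inj: "inj_on \<phi> (vertex_covers V E)" using bij bij_betw_def by blast
  have inv1: "\<forall>S\<in>vertex_covers V E. \<psi> (\<phi> S) = S" unfolding \<psi>_def using inj by simp
  have inv2: "\<forall>S\<in>vertex_covers V' E'. \<phi> (\<psi> S) = S" unfolding \<psi>_def
    using bij by (simp add: bij_betw_def f_inv_into_f)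
  have pres2: "\<forall>S\<in>vertex_covers V' E'. \<forall>T\<in>vertex_covers V' E'. adj V' E' S T \<longleftrightarrow> adj V E (\<psi> S) (\<psi> T)"
  proof (intro ballI)
    fix S T assume S: "S \<in> vertex_covers V' E'" and T: "T \<in> vertex_covers V' E'"
    have "\<psi> S \<in> vertex_covers V E" "\<psi> T \<in> vertex_covers V E"
      using bij2 S T bij_betwE by blast+
    then have "adj V E (\<psi> S) (\<psi> T) \<longleftrightarrow> adj V' E' (\<phi> (\<psi> S)) (\<phi> (\<psi> T))" using pres by blast
    then show "adj V' E' S T \<longleftrightarrow> adj V E (\<psi> S) (\<psi> T)" using inv2 S T by simp
  qed
  define f where "f x = lab (\<phi> (V - {x})) (\<phi> V)" for x
  define g where "g y = lab (\<psi> (V' - {y})) (\<psi> V')" for y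
  have fV: "\<And>x. x \<in> V \<Longrightarrow> f x \<in> V'" and gf: "\<And>x. x \<in> V \<Longrightarrow> g (f x) = x"
    using half[OF sg sg' bij pres bij2 pres2 inv1] unfolding f_def g_def by auto
  have gV: "\<And>y. y \<in> V' \<Longrightarrow> g y \<in> V" and fg: "\<And>y. y \<in> V' \<Longrightarrow> f (g y) = y"
    using half[OF sg' sg bij2 pres2 bij pres inv2] unfolding f_def g_def by auto
  have bf: "bij_betw f V V'"
    by (rule bij_betw_byWitness[where f'=g]) (use fV gV fg gf in auto)
  have ed: "\<forall>u\<in>V. \<forall>v\<in>V. {u, v} \<in> E \<longleftrightarrow> {f u, f v} \<in> E'"
  proof (intro ballI iffI)
    fix u v assume u: "u \<in> V" and v: "v \<in> V" and e: "{u,v} \<in> E"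
    show "{f u, f v} \<in> E'"
    proof (rule ccontr)
      assume ne: "{f u, f v} \<notin> E'"
      have uv: "u \<noteq> v" using e singleton_not_edge[OF sg, of u] by auto
      have "g (f u) \<noteq> g (f v)" using gf u v uv by simp
      from edge_half[OF sg' sg bij2 pres2 fV[OF u] fV[OF v] ne] this
      have "{g (f u), g (f v)} \<notin> E" unfolding g_def by simp
      then show False using e gf u v by simp
    qed
  next
    fix u v assume u: "u \<in> V" and v: "v \<in> V" and e: "{f u, f v} \<in> E'"
    show "{u,v} \<in> E"
    proof (rule ccontr)
      assume ne: "{u, v} \<notin> E"
      have uv: "f u \<noteq> f v" using e singleton_not_edge[OF sg', of "f u"] by auto
      from edge_half[OF sg sg' bij pres u v ne] uv
      have "{f u, f v} \<notin> E'" unfolding f_def by simp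
      then show False using e by simp
    qed
  qed
  show ?thesis unfolding graph_iso_def using bf ed by blast
qed

end
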